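(* Let $(\mathcal S,\mathcal A,P,r)$ be any finite MDP (general/multichain) and $(g^\star,h^\star)$ a solution of the modified Bellman equations. Let $V^0\in\mathbb R^n$, let $0<\lambda_j<1$ for $j\ge1$ with $\limsup_j\lambda_j<1$, let $V^k=\lambda_kV^{k-1}+(1-\lambda_k)TV^{k-1}$ for $k\ge1$, and let $\pi_k$ be greedy policies, $T^{\pi_k}V^k=TV^k$. Then there exists an integer $K\ge0$ such that $\mathcal P^{\pi_k}g^\star=g^\star$ for all $k\ge K$; taking $K$ to be the minimal such integer, for every $k>K$, \[\|g^\star-g^{\pi_k}\|_\infty\le\|TV^k-V^k-g^\star\|_\infty\le\frac{2\|V^0-h^\star\|_\infty}{\sqrt{\varpi\sum_{i=K+1}^k\lambda_i(1-\lambda_i)}},\] where $\varpi=3.141592\ldots$ is the circle constant.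
   Context: An MDP $(\mathcal S,\mathcal A,P,r)$ has finite state space $\mathcal S$ ($|\mathcal S|=n$, functions identified with $\mathbb R^n$), finite action space, transition probabilities $P(s'\mid s,a)$ and bounded reward $r$. For a policy $\pi$: $r^\pi(s)=\sum_a\pi(a\mid s)r(s,a)$, $\mathcal P^\pi(s,s')=\sum_a\pi(a\mid s)P(s'\mid s,a)$, $g^\pi(s)=\liminf_{T\to\infty}\frac1T\mathbb E_\pi[\sum_{t=0}^{T-1}r(s_t,a_t)\mid s_0=s]$, $g^\star=\max_\pi g^\pi$. $T^\pi V=r^\pi+\mathcal P^\pi V$, $(TV)(s)=\max_a\{r(s,a)+\sum_{s'}P(s'\mid s,a)V(s')\}$. A pair $(g,h)$ solves the modified Bellman equations if $\max_a\sum_{s'}P(s'\mid s,a)g(s')=g(s)$ and $\max_a\{r(s,a)+\sum_{s'}P(s'\mid s,a)h(s')\}=h(s)+g(s)$ for all $s$, with some policy attaining both maxima simultaneously; the first component of any solution equals $g^\star$. *)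

theory Defs
  imports "HOL-Analysis.Analysis"
begin

text \<open>A (stationary, possibly randomized)
  policy is \<sigma> s a = probability of action a in state s. Vectors in R^n are
  functions 's => real.\<close>

definition is_mdp :: "('s::finite \<Rightarrow> 'a::finite \<Rightarrow> 's \<Rightarrow> real) \<Rightarrow> bool" where
  "is_mdp P \<longleftrightarrow> (\<forall>s a s'. 0 \<le> P s a s') \<and> (\<forall>s a. (\<Sum>s'\<in>UNIV. P s a s') = 1)"

definition is_policy :: "('s::finite \<Rightarrow> 'a::finite \<Rightarrow> real) \<Rightarrow> bool" where
  "is_policy \<sigma> \<longleftrightarrow> (\<forall>s a. 0 \<le> \<sigma> s a) \<and> (\<forall>s. (\<Sum>a\<in>UNIV. \<sigma> s a) = 1)"

definition r_pol :: "('s::finite \<Rightarrow> 'a::finite \<Rightarrow> real) \<Rightarrow> ('s \<Rightarrow> 'a \<Rightarrow> real) \<Rightarrow> 's \<Rightarrow> real" where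
  "r_pol r \<sigma> s = (\<Sum>a\<in>UNIV. \<sigma> s a * r s a)"

definition P_pol :: "('s::finite \<Rightarrow> 'a::finite \<Rightarrow> 's \<Rightarrow> real) \<Rightarrow> ('s \<Rightarrow> 'a \<Rightarrow> real)
    \<Rightarrow> ('s \<Rightarrow> real) \<Rightarrow> 's \<Rightarrow> real" where
  "P_pol P \<sigma> v s = (\<Sum>s'\<in>UNIV. (\<Sum>a\<in>UNIV. \<sigma> s a * P s a s') * v s')"

definition T_pol :: "('s::finite \<Rightarrow> 'a::finite \<Rightarrow> 's \<Rightarrow> real) \<Rightarrow> ('s \<Rightarrow> 'a \<Rightarrow> real)
    \<Rightarrow> ('s \<Rightarrow> 'a \<Rightarrow> real) \<Rightarrow> ('s \<Rightarrow> real) \<Rightarrow> 's \<Rightarrow> real" where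
  "T_pol P r \<sigma> V s = r_pol r \<sigma> s + P_pol P \<sigma> V s"

definition T_opt :: "('s::finite \<Rightarrow> 'a::finite \<Rightarrow> 's \<Rightarrow> real) \<Rightarrow> ('s \<Rightarrow> 'a \<Rightarrow> real)
    \<Rightarrow> ('s \<Rightarrow> real) \<Rightarrow> 's \<Rightarrow> real" where
  "T_opt P r V s = (MAX a. r s a + (\<Sum>s'\<in>UNIV. P s a s' * V s'))"

text \<open>Average reward (gain) of a stationary policy:
  g^\<sigma>(s) = liminf_T (1/T) sum_{t<T} E_pi[r(s_t,a_t) | s_0 = s],
  where E_pi[r(s_t,a_t) | s_0 = s] = ((P^\<sigma>)^t r^\<sigma>)(s).\<close>
definition gain :: "('s::finite \<Rightarrow> 'a::finite \<Rightarrow> 's \<Rightarrow> real) \<Rightarrow> ('s \<Rightarrow> 'a \<Rightarrow> real)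
    \<Rightarrow> ('s \<Rightarrow> 'a \<Rightarrow> real) \<Rightarrow> 's \<Rightarrow> real" where
  "gain P r \<sigma> s = real_of_ereal (liminf (\<lambda>T::nat. ereal
      ((1 / real T) * (\<Sum>t<T. ((P_pol P \<sigma> ^^ t) (r_pol r \<sigma>)) s))))"

definition mod_bellman :: "('s::finite \<Rightarrow> 'a::finite \<Rightarrow> 's \<Rightarrow> real) \<Rightarrow> ('s \<Rightarrow> 'a \<Rightarrow> real)
    \<Rightarrow> ('s \<Rightarrow> real) \<Rightarrow> ('s \<Rightarrow> real) \<Rightarrow> bool" where
  "mod_bellman P r g h \<longleftrightarrow>
     (\<forall>s. (MAX a. (\<Sum>s'\<in>UNIV. P s a s' * g s')) = g s) \<and>
     (\<forall>s. (MAX a. r s a + (\<Sum>s'\<in>UNIV. P s a s' * h s')) = h s + g s) \<and>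
     (\<exists>d::'s \<Rightarrow> 'a. \<forall>s. (\<Sum>s'\<in>UNIV. P s (d s) s' * g s') = g s \<and>
                        r s (d s) + (\<Sum>s'\<in>UNIV. P s (d s) s' * h s') = h s + g s)"

definition supnorm :: "('s::finite \<Rightarrow> real) \<Rightarrow> real" where
  "supnorm v = (MAX s. \<bar>v s\<bar>)"

end

theory Submission
  imports Defs "HOL-Probability.Probability"
begin

lemma normal_le1:
  fixes \<sigma> :: real assumes "0 < \<sigma>"
  shows "integral {-1..1} (normal_density 0 \<sigma>) \<le> 1"
proof -
  have si: "set_integrable lborel {-1..1::real} (normal_density 0 \<sigma>)"
    unfolding set_integrable_def
    using assms by (intro integrable_mult_indicator integrable_normal_density) auto
  have "integral {-1..1} (normal_density 0 \<sigma>) = (LINT x:{-1..1}|lborel. normal_density 0 \<sigma> x)"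
    using set_borel_integral_eq_integral(2)[OF si] by simp
  also have "\<dots> = (\<integral>x. indicator {-1..1} x *\<^sub>R normal_density 0 \<sigma> x \<partial>lborel)"
    by (simp add: set_lebesgue_integral_def)
  also have "\<dots> \<le> (\<integral>x. normal_density 0 \<sigma> x \<partial>lborel)"
    using assms by (intro integral_mono' integrable_normal_density) (auto simp: indicator_def)
  also have "\<dots> = 1" using assms by simp
  finally show ?thesis .
qed

lemma gauss_le:
  fixes b :: real assumes "0 < b"
  shows "integral {-1..1} (\<lambda>u. exp (- b * u\<^sup>2)) \<le> sqrt (pi / b)"
proof -
  define \<sigma> where "\<sigma> = sqrt (1 / (2*b))"
  have sp: "0 < \<sigma>" using assms by (simp add: \<sigma>_def)
  have s2: "\<sigma>\<^sup>2 = 1/(2*b)" using assms by (simp add: \<sigma>_def)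
  have eq: "(\<lambda>u. exp (- b * u\<^sup>2)) = (\<lambda>u. sqrt (pi / b) * normal_density 0 \<sigma> u)"
  proof
    fix u
    have "sqrt (2 * pi * \<sigma>\<^sup>2) = sqrt (pi / b)" using s2 assms by (simp add: field_simps)
    moreover have "-(u - 0)\<^sup>2/ (2 * \<sigma>\<^sup>2) = - b * u\<^sup>2" using s2 assms sp by (simp add: divide_simps mult.commute)
    moreover have "sqrt (pi/b) > 0" using assms by simp
    ultimately have "normal_density 0 \<sigma> u = exp (- b * u\<^sup>2) / sqrt (pi / b)"
      unfolding normal_density_def by (metis (no_types, lifting) divide_inverse minus_divide_left mult_1 mult.commute)
    then show "exp (- b * u\<^sup>2) = sqrt (pi / b) * normal_density 0 \<sigma> u"
      using \<open>sqrt (pi/b) > 0\<close> assms by simp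
  qed
  have "integral {-1..1} (\<lambda>u. exp (- b * u\<^sup>2)) = sqrt (pi / b) * integral {-1..1} (normal_density 0 \<sigma>)"
    unfolding eq by simp
  also have "\<dots> \<le> sqrt (pi / b) * 1"
    using normal_le1[OF sp] assms by (intro mult_left_mono) auto
  finally show ?thesis by simp
qed


lemma J_bound:
  fixes b :: real assumes b: "0 < b"
  shows "integral {-pi..pi} (\<lambda>t. exp (- b * (sin (t/2))\<^sup>2) * (1 + cos t)) \<le> 4 * sqrt (pi / b)"
proof -
  define e where "e = (\<lambda>u::real. exp (- b * u\<^sup>2))"
  define F where "F = (\<lambda>y. integral {-1..y} e)"
  define g where "g = (\<lambda>t::real. e (sin (t/2)) * (cos (t/2) / 2))"
  have ce: "continuous_on {-1..1} e" unfolding e_def by (intro continuous_intros)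
  have der: "((F \<circ> (\<lambda>t. sin (t/2))) has_vector_derivative g t) (at t within {-pi..pi})"
    if "t \<in> {-pi..pi}" for t
  proof -
    have d1: "((\<lambda>t. sin (t/2)) has_vector_derivative (cos (t/2) / 2)) (at t within {-pi..pi})"
      by (auto intro!: derivative_eq_intros simp: has_real_derivative_iff_has_vector_derivative[symmetric])
    have "sin (t/2) \<in> {-1..1}" by auto
    then have d2: "(F has_vector_derivative e (sin (t/2))) (at (sin (t/2)) within {-1..1})"
      unfolding F_def by (rule integral_has_vector_derivative[OF ce])
    have "(\<lambda>t. sin (t/2)) ` {-pi..pi} \<subseteq> {-1..1}" by auto
    with d2 have d3: "(F has_vector_derivative e (sin (t/2))) (at (sin (t/2)) within (\<lambda>t. sin (t/2)) ` {-pi..pi})"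
      by (rule has_vector_derivative_within_subset)
    from vector_diff_chain_within[OF d1 d3] show ?thesis by (simp add: g_def mult.commute)
  qed
  have "(g has_integral ((F \<circ> (\<lambda>t. sin (t/2))) pi - (F \<circ> (\<lambda>t. sin (t/2))) (-pi))) {-pi..pi}"
    by (rule fundamental_theorem_of_calculus) (use der in \<open>auto simp: o_def\<close>)
  moreover have "(F \<circ> (\<lambda>t. sin (t/2))) pi - (F \<circ> (\<lambda>t. sin (t/2))) (-pi) = integral {-1..1} e"
    by (simp add: F_def)
  ultimately have gi: "(g has_integral integral {-1..1} e) {-pi..pi}" by simp
  have "integral {-pi..pi} (\<lambda>t. exp (- b * (sin (t/2))\<^sup>2) * (1 + cos t)) \<le> integral {-pi..pi} (\<lambda>t. 4 * g t)"
  proof (rule integral_le)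
    show "(\<lambda>t. exp (- b * (sin (t/2))\<^sup>2) * (1 + cos t)) integrable_on {-pi..pi}"
      by (intro integrable_continuous_interval continuous_intros) auto
    show "(\<lambda>t. 4 * g t) integrable_on {-pi..pi}"
      using gi by (intro integrable_on_mult_right has_integral_integrable)
    fix t assume t: "t \<in> {-pi..pi}"
    have c0: "0 \<le> cos (t/2)" using t by (intro cos_ge_zero) auto
    have c1: "cos (t/2) \<le> 1" by simp
    have "1 + cos t = 2 * (cos (t/2))\<^sup>2"
      using cos_double_cos[of "t/2"] by simp
    also have "\<dots> \<le> 2 * cos (t/2)" using c0 c1 by (simp add: power2_eq_square mult_left_le_one_le)
    finally have "1 + cos t \<le> 2 * cos (t/2)" .
    then have "exp (- b * (sin (t/2))\<^sup>2) * (1 + cos t) \<le> exp (- b * (sin (t/2))\<^sup>2) * (2 * cos (t/2))"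
      by (intro mult_left_mono) auto
    then show "exp (- b * (sin (t/2))\<^sup>2) * (1 + cos t) \<le> 4 * g t"
      by (simp add: g_def e_def)
  qed
  also have "\<dots> = 4 * integral {-1..1} e"
    using gi by (simp add: integral_unique)
  also have "\<dots> \<le> 4 * sqrt (pi / b)"
    using gauss_le[OF b] by (simp add: e_def)
  finally show ?thesis .
qed


fun Dn :: "nat \<Rightarrow> real \<Rightarrow> real" where
  "Dn 0 t = 0"
| "Dn (Suc n) t = Dn n t + cos (real n * t) + cos ((real n + 1) * t)"

fun Bf :: "(nat \<Rightarrow> real) \<Rightarrow> nat \<Rightarrow> nat \<Rightarrow> nat \<Rightarrow> real \<Rightarrow> real" where
  "Bf a lo 0 n t = Dn n t"
| "Bf a lo (Suc k) n t = (1 - a (lo + k + 1)) * Bf a lo k n t + a (lo + k + 1) * Bf a lo k (Suc n) t"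

definition phi :: "(nat \<Rightarrow> real) \<Rightarrow> nat \<Rightarrow> real \<Rightarrow> real" where
  "phi a p t = (\<Prod>i\<in>{1..p}. 1 - 2 * (a i * (1 - a i)) * (1 - cos t))"

definition Th :: "(nat \<Rightarrow> real) \<Rightarrow> nat \<Rightarrow> nat \<Rightarrow> nat \<Rightarrow> real" where
  "Th a p m n = integral {-pi..pi} (\<lambda>t. phi a p t * Bf a p (m - p) n t) / (2 * pi)"

lemma cont_Dn: "continuous_on UNIV (Dn n)"
  by (induction n) (auto intro!: continuous_intros)

lemma cont_Bf: "continuous_on UNIV (Bf a lo k n)"
proof (induction k arbitrary: n)
  case 0 then show ?case using cont_Dn by (simp add: fun_eq_iff)
next
  case (Suc k)
  have e: "Bf a lo (Suc k) n = (\<lambda>t. (1 - a (lo + k + 1)) * Bf a lo k n t + a (lo + k + 1) * Bf a lo k (Suc n) t)"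
    by (simp add: fun_eq_iff)
  show ?case unfolding e using Suc by (intro continuous_intros) auto
qed

lemma cont_phi: "continuous_on UNIV (phi a p)"
  unfolding phi_def by (intro continuous_intros)

lemma phi_Suc: "phi a (Suc p) t = phi a p t * (1 - 2 * (a (Suc p) * (1 - a (Suc p))) * (1 - cos t))"
  unfolding phi_def by (simp add: prod.cl_ivl_Suc)

lemma phi_0: "phi a 0 t = 1" unfolding phi_def by simp

lemma Dn_S: "Dn (Suc n) t = Dn n t + cos (real n * t) + cos ((real n + 1) * t)"
  by (rule Dn.simps(2))

declare Dn.simps(2)[simp del]

lemma Dn_rec: "2 * cos t * Dn (Suc n) t = Dn (Suc (Suc n)) t + Dn n t"
proof (induction n)
  case 0
  have "2 * cos t * cos t = 1 + cos (2 * t)" by (simp add: cos_double_cos power2_eq_square)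
  moreover have "Dn (Suc 0) t = 1 + cos t" using Dn_S[of 0 t] by simp
  moreover have "Dn (Suc (Suc 0)) t = 1 + cos t + cos t + cos (2 * t)" using Dn_S[of 1 t] Dn_S[of 0 t] by simp
  ultimately show ?case by (simp add: algebra_simps)
next
  case (Suc n)
  have c1: "2 * cos t * cos ((real n + 1) * t) = cos (real n * t) + cos ((real n + 2) * t)"
  proof -
    have "cos t * cos ((real n + 1) * t) = (cos (t - (real n + 1) * t) + cos (t + (real n + 1) * t)) / 2"
      by (rule cos_times_cos)
    moreover have "t - (real n + 1) * t = - (real n * t)" by (simp add: algebra_simps)
    moreover have "t + (real n + 1) * t = (real n + 2) * t" by (simp add: algebra_simps)
    ultimately show ?thesis by simp
  qed
  have c2: "2 * cos t * cos ((real n + 2) * t) = cos ((real n + 1) * t) + cos ((real n + 3) * t)"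
  proof -
    have "cos t * cos ((real n + 2) * t) = (cos (t - (real n + 2) * t) + cos (t + (real n + 2) * t)) / 2"
      by (rule cos_times_cos)
    moreover have "t - (real n + 2) * t = - ((real n + 1) * t)" by (simp add: algebra_simps)
    moreover have "t + (real n + 2) * t = (real n + 3) * t" by (simp add: algebra_simps)
    ultimately show ?thesis by simp
  qed
  have e2: "Dn (Suc (Suc n)) t = Dn (Suc n) t + cos ((real n + 1) * t) + cos ((real n + 2) * t)"
    using Dn_S[of "Suc n" t] by (simp add: add.commute)
  have e3: "Dn (Suc (Suc (Suc n))) t = Dn (Suc (Suc n)) t + cos ((real n + 2) * t) + cos ((real n + 3) * t)"
    using Dn_S[of "Suc (Suc n)" t] by (simp add: add.commute)
  have e1: "Dn (Suc n) t = Dn n t + cos (real n * t) + cos ((real n + 1) * t)"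
    by (rule Dn_S)
  have "2 * cos t * Dn (Suc (Suc n)) t = 2 * cos t * Dn (Suc n) t + 2 * cos t * cos ((real n + 1) * t)
          + 2 * cos t * cos ((real n + 2) * t)"
    unfolding e2 by (simp add: distrib_left)
  also have "\<dots> = Dn (Suc (Suc n)) t + Dn n t + cos (real n * t) + cos ((real n + 2) * t)
      + cos ((real n + 1) * t) + cos ((real n + 3) * t)"
    unfolding Suc c1 c2 by simp
  also have "\<dots> = Dn (Suc (Suc (Suc n))) t + Dn (Suc n) t"
    unfolding e3 e1 by simp
  finally show ?case .
qed

lemma Bf_rec: "2 * cos t * Bf a lo k (Suc n) t = Bf a lo k (Suc (Suc n)) t + Bf a lo k n t"
proof (induction k arbitrary: n)
  case 0 then show ?case using Dn_rec by simp
next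
  case (Suc k)
  have "2 * cos t * Bf a lo (Suc k) (Suc n) t
     = (1 - a (lo + k + 1)) * (2 * cos t * Bf a lo k (Suc n) t) + a (lo + k + 1) * (2 * cos t * Bf a lo k (Suc (Suc n)) t)"
    by (simp add: algebra_simps)
  also have "\<dots> = (1 - a (lo + k + 1)) * (Bf a lo k (Suc (Suc n)) t + Bf a lo k n t)
      + a (lo + k + 1) * (Bf a lo k (Suc (Suc (Suc n))) t + Bf a lo k (Suc n) t)"
    using Suc[of n] Suc[of "Suc n"] by simp
  also have "\<dots> = Bf a lo (Suc k) (Suc (Suc n)) t + Bf a lo (Suc k) n t"
    by (simp add: algebra_simps)
  finally show ?case .
qed

lemma Bf_bottom: "Bf a lo (Suc k) n t = (1 - a (lo + 1)) * Bf a (Suc lo) k n t + a (lo + 1) * Bf a (Suc lo) k (Suc n) t"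
proof (induction k arbitrary: n)
  case 0 then show ?case by simp
next
  case (Suc k)
  have "Bf a lo (Suc (Suc k)) n t = (1 - a (lo + Suc k + 1)) * Bf a lo (Suc k) n t + a (lo + Suc k + 1) * Bf a lo (Suc k) (Suc n) t"
    by (simp only: Bf.simps)
  also have "\<dots> = (1 - a (lo + Suc k + 1)) * ((1 - a (lo + 1)) * Bf a (Suc lo) k n t + a (lo + 1) * Bf a (Suc lo) k (Suc n) t)
     + a (lo + Suc k + 1) * ((1 - a (lo + 1)) * Bf a (Suc lo) k (Suc n) t + a (lo + 1) * Bf a (Suc lo) k (Suc (Suc n)) t)"
    using Suc[of n] Suc[of "Suc n"] by simp
  also have "\<dots> = (1 - a (lo + 1)) * Bf a (Suc lo) (Suc k) n t + a (lo + 1) * Bf a (Suc lo) (Suc k) (Suc n) t"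
    by (simp add: algebra_simps)
  finally show ?case .
qed

lemma cos_nat_integral:
  assumes "n \<noteq> 0"
  shows "((\<lambda>t. cos (real n * t)) has_integral 0) {-pi..pi}"
proof -
  have "((\<lambda>t. cos (real n * t)) has_integral (sin (real n * pi) / real n - sin (real n * (-pi)) / real n)) {-pi..pi}"
    using assms
    by (intro fundamental_theorem_of_calculus)
       (auto intro!: derivative_eq_intros simp: has_real_derivative_iff_has_vector_derivative[symmetric])
  moreover have "sin (real n * pi) = 0" using sin_times_pi_eq_0[of "real n"] by simp
  ultimately show ?thesis by simp
qed

lemma integral_Dn: "integral {-pi..pi} (Dn (Suc n)) = 2 * pi"
proof (induction n)
  case 0
  have "integral {-pi..pi} (Dn (Suc 0)) = integral {-pi..pi} (\<lambda>t. 1 + cos t)"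
    by (intro integral_cong) (simp add: Dn_S)
  also have "\<dots> = 2 * pi"
    using has_integral_add[OF has_integral_const_real[of "1::real" "-pi" pi] cos_nat_integral[of 1]]
    by (simp add: integral_unique)
  finally show ?case .
next
  case (Suc n)
  have h: "(Dn (Suc n) has_integral 2 * pi) {-pi..pi}"
    using Suc integrable_continuous_interval[OF continuous_on_subset[OF cont_Dn]]
    by (metis has_integral_integral subset_UNIV)
  have "((\<lambda>t. Dn (Suc n) t + cos (real (Suc n) * t) + cos ((real (Suc n) + 1) * t)) has_integral (2*pi + 0 + 0)) {-pi..pi}"
    using cos_nat_integral[of "Suc n"] cos_nat_integral[of "Suc (Suc n)"]
    by (intro has_integral_add h) (auto simp: add.commute)
  moreover have "Dn (Suc (Suc n)) = (\<lambda>t. Dn (Suc n) t + cos (real (Suc n) * t) + cos ((real (Suc n) + 1) * t))"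
    by (rule ext) (rule Dn_S)
  ultimately have "(Dn (Suc (Suc n)) has_integral (2*pi)) {-pi..pi}" by simp
  then show ?case by (rule integral_unique)
qed

lemma integral_Bf: "integral {-pi..pi} (Bf a lo k (Suc n)) = 2 * pi"
proof (induction k arbitrary: n)
  case 0
  have "Bf a lo 0 (Suc n) = Dn (Suc n)" by (rule ext) (simp only: Bf.simps)
  then show ?case using integral_Dn[of n] by (simp only:)
next
  case (Suc k)
  have i1: "Bf a lo k m integrable_on {-pi..pi}" for m
    by (rule integrable_continuous_interval[OF continuous_on_subset[OF cont_Bf]]) auto
  have "integral {-pi..pi} (Bf a lo (Suc k) (Suc n))
     = integral {-pi..pi} (\<lambda>t. (1 - a (lo + k + 1)) * Bf a lo k (Suc n) t + a (lo + k + 1) * Bf a lo k (Suc (Suc n)) t)"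
    by (intro integral_cong) simp
  also have "\<dots> = (1 - a (lo + k + 1)) * integral {-pi..pi} (Bf a lo k (Suc n)) + a (lo + k + 1) * integral {-pi..pi} (Bf a lo k (Suc (Suc n)))"
    using i1 by (simp add: integral_add integrable_on_mult_right)
  also have "\<dots> = 2 * pi" using Suc[of n] Suc[of "Suc n"] by (simp add: algebra_simps)
  finally show ?case .
qed

lemma integrable_prod_phi: "(\<lambda>t. phi a p t * Bf a lo k n t) integrable_on {-pi..pi}"
  by (rule integrable_continuous_interval[OF continuous_on_subset[of UNIV]])
     (auto intro!: continuous_intros cont_phi cont_Bf)

lemma lin2:
  fixes f g h :: "real \<Rightarrow> real"
  assumes "f integrable_on {-pi..pi}" "g integrable_on {-pi..pi}"
    and "\<And>t. h t = c * f t + d * g t"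
  shows "integral {-pi..pi} h = c * integral {-pi..pi} f + d * integral {-pi..pi} g"
proof -
  have "integral {-pi..pi} h = integral {-pi..pi} (\<lambda>t. c * f t + d * g t)"
    using assms(3) by (intro integral_cong) simp
  also have "\<dots> = c * integral {-pi..pi} f + d * integral {-pi..pi} g"
    using integral_add[OF integrable_on_mult_right[OF assms(1), of c] integrable_on_mult_right[OF assms(2), of d]]
    by simp
  finally show ?thesis .
qed

lemma Th_R1:
  assumes "p < q"
  shows "Th a p q 0 = (1 - a q) * Th a p (q - 1) 0 + a q * Th a p (q - 1) 1"
proof -
  define k where "k = q - 1 - p"
  have k1: "q - p = Suc k" using assms k_def by simp
  have k3: "p + k + 1 = q" using assms k_def by simp
  have II: "integral {-pi..pi} (\<lambda>t. phi a p t * Bf a p (q - p) 0 t)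
     = (1 - a q) * integral {-pi..pi} (\<lambda>t. phi a p t * Bf a p (q - 1 - p) 0 t)
       + a q * integral {-pi..pi} (\<lambda>t. phi a p t * Bf a p (q - 1 - p) 1 t)"
  proof (rule lin2[OF integrable_prod_phi integrable_prod_phi])
    fix t
    show "phi a p t * Bf a p (q - p) 0 t = (1 - a q) * (phi a p t * Bf a p (q - 1 - p) 0 t) + a q * (phi a p t * Bf a p (q - 1 - p) 1 t)"
      unfolding k1 k_def[symmetric] Bf.simps k3 by (simp add: algebra_simps)
  qed
  have gen: "\<And>I I1 I0 b c::real. I = (1-b)*I1 + b*I0 \<Longrightarrow> I/c = (1-b)*(I1/c) + b*(I0/c)"
    by (simp add: add_divide_distrib)
  show ?thesis unfolding Th_def by (rule gen[OF II])
qed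

lemma Th_R2:
  assumes "Suc p \<le> m"
  shows "Th a (Suc p) m 1 = (1 - a (Suc p)) * Th a p m 1 + a (Suc p) * Th a p m 0"
proof -
  define k where "k = m - Suc p"
  have k: "m - p = Suc k" using assms k_def by simp
  define b where "b = a (Suc p)"
  have pt: "phi a (Suc p) t * Bf a (Suc p) (m - Suc p) 1 t
     = (1 - b) * (phi a p t * Bf a p (m - p) 1 t) + b * (phi a p t * Bf a p (m - p) 0 t)" for t
  proof -
    have r: "Bf a (Suc p) k 2 t = 2 * cos t * Bf a (Suc p) k 1 t - Bf a (Suc p) k 0 t"
      using Bf_rec[of t a "Suc p" k 0] by (simp add: numeral_2_eq_2)
    have e1: "Bf a p (m - p) 1 t = (1 - b) * Bf a (Suc p) k 1 t + b * Bf a (Suc p) k 2 t"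
      unfolding k b_def using Bf_bottom[of a p k 1 t] by (simp add: numeral_2_eq_2)
    have e0: "Bf a p (m - p) 0 t = (1 - b) * Bf a (Suc p) k 0 t + b * Bf a (Suc p) k 1 t"
      unfolding k b_def using Bf_bottom[of a p k 0 t] by simp
    have ph: "phi a (Suc p) t = phi a p t * (1 - 2 * (b * (1 - b)) * (1 - cos t))"
      by (simp add: phi_Suc b_def)
    have ar: "\<And>B1 B0 P c b::real.
       P * (1 - 2 * (b * (1 - b)) * (1 - c)) * B1 = (1-b)*(P*((1-b)*B1 + b*(2*c*B1 - B0))) + b*(P*((1-b)*B0 + b*B1))"
      by (simp add: algebra_simps)
    show ?thesis unfolding ph e1 e0 r k_def[symmetric] by (rule ar)
  qed
  have "integral {-pi..pi} (\<lambda>t. phi a (Suc p) t * Bf a (Suc p) (m - Suc p) 1 t)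
     = (1 - b) * integral {-pi..pi} (\<lambda>t. phi a p t * Bf a p (m - p) 1 t)
       + b * integral {-pi..pi} (\<lambda>t. phi a p t * Bf a p (m - p) 0 t)"
    by (rule lin2[OF integrable_prod_phi integrable_prod_phi]) (rule pt)
  note II = this
  have gen: "\<And>I I1 I0 b c::real. I = (1-b)*I1 + b*I0 \<Longrightarrow> I/c = (1-b)*(I1/c) + b*(I0/c)"
    by (simp add: add_divide_distrib)
  show ?thesis unfolding Th_def using gen[OF II] unfolding b_def .
qed

lemma Th_base1: "Th a 0 m 1 = 1"
proof -
  have "integral {-pi..pi} (\<lambda>t. phi a 0 t * Bf a 0 (m - 0) 1 t) = integral {-pi..pi} (Bf a 0 m (Suc 0))"
    by (intro integral_cong) (simp add: phi_0)
  then show ?thesis unfolding Th_def using integral_Bf[of a 0 m 0] by simp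
qed

lemma Th_base0: "Th a p p 0 = 0"
  unfolding Th_def by simp


lemma comb: "(T::real) = (1-b)*X + b*Y \<Longrightarrow> (1-b)*(2*R*X) + b*(2*R*Y) = 2*R*T"
  by (hypsubst) (simp add: algebra_simps)

lemma Th_base1': "Th a 0 m (Suc 0) = 1"
  using Th_base1[of a m] by simp

lemma Th_R2': "Suc p \<le> m \<Longrightarrow> Th a (Suc p) m (Suc 0) = (1 - a (Suc p)) * Th a p m (Suc 0) + a (Suc p) * Th a p m 0"
  using Th_R2[of p m a] by simp

lemma Th_R1': "p < q \<Longrightarrow> Th a p q 0 = (1 - a q) * Th a p (q - 1) 0 + a q * Th a p (q - 1) (Suc 0)"
  using Th_R1[of p q a] by simp

lemma supnorm_ge: "\<bar>v s\<bar> \<le> supnorm v"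
  unfolding supnorm_def by (rule Max_ge) auto

lemma supnorm_le: "(\<And>s. \<bar>v s\<bar> \<le> M) \<Longrightarrow> supnorm v \<le> M"
  unfolding supnorm_def by (subst Max_le_iff) auto

lemma supnorm_nonneg: "0 \<le> supnorm v"
  using supnorm_ge[of v undefined] by linarith

lemma supnorm_sym: "supnorm (\<lambda>s. u s - v s) = supnorm (\<lambda>s. v s - u s)"
  unfolding supnorm_def by (simp add: abs_minus_commute)

lemma supnorm_conv:
  assumes "0 \<le> b" "b \<le> 1"
  shows "supnorm (\<lambda>s. ((1 - b) * y s + b * w s) - z s) \<le> (1 - b) * supnorm (\<lambda>s. y s - z s) + b * supnorm (\<lambda>s. w s - z s)"
proof (rule supnorm_le)
  fix s
  have "\<bar>((1 - b) * y s + b * w s) - z s\<bar> = \<bar>(1 - b) * (y s - z s) + b * (w s - z s)\<bar>"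
    by (simp add: algebra_simps)
  also have "\<dots> \<le> (1 - b) * \<bar>y s - z s\<bar> + b * \<bar>w s - z s\<bar>"
    using assms by (simp add: abs_triangle_ineq[THEN order_trans] abs_mult)
  also have "\<dots> \<le> (1 - b) * supnorm (\<lambda>s. y s - z s) + b * supnorm (\<lambda>s. w s - z s)"
    using assms supnorm_ge[of "\<lambda>s. y s - z s" s] supnorm_ge[of "\<lambda>s. w s - z s" s]
    by (intro add_mono mult_left_mono) auto
  finally show "\<bar>((1 - b) * y s + b * w s) - z s\<bar> \<le> \<dots>" .
qed

lemma KM_bound:
  fixes S :: "('s::finite \<Rightarrow> real) \<Rightarrow> ('s \<Rightarrow> real)" and x :: "nat \<Rightarrow> 's \<Rightarrow> real"
  assumes ne: "\<And>u v. supnorm (\<lambda>s. S u s - S v s) \<le> supnorm (\<lambda>s. u s - v s)"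
    and rec: "\<And>j. x (Suc j) = (\<lambda>s. (1 - a (Suc j)) * x j s + a (Suc j) * S (x j) s)"
    and a01: "\<And>j. 0 \<le> a j \<and> a j \<le> 1"
    and bd: "\<And>m. supnorm (\<lambda>s. x 0 s - S (x m) s) \<le> 2 * R"
  shows "p \<le> m \<Longrightarrow> supnorm (\<lambda>s. x p s - S (x m) s) \<le> 2 * R * Th a p m 1
              \<and> supnorm (\<lambda>s. x p s - x m s) \<le> 2 * R * Th a p m 0"
proof (induction m arbitrary: p)
  case 0
  then have p: "p = 0" by simp
  have z: "supnorm (\<lambda>s. x 0 s - x 0 s) = 0" by (simp add: supnorm_def)
  show ?case using bd[of 0] Th_base1'[of a 0] Th_base0[of a 0] z p by simp
next
  case (Suc m)
  note outer = Suc.IH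
  show ?case using Suc.prems
  proof (induction p)
    case 0
    have Y: "supnorm (\<lambda>s. x 0 s - S (x (Suc m)) s) \<le> 2 * R * Th a 0 (Suc m) 1"
      using bd by (simp add: Th_base1')
    have X: "supnorm (\<lambda>s. x 0 s - x (Suc m) s) \<le> 2 * R * Th a 0 (Suc m) 0"
    proof -
      have "supnorm (\<lambda>s. x 0 s - x (Suc m) s) = supnorm (\<lambda>s. x (Suc m) s - x 0 s)" by (rule supnorm_sym)
      also have "\<dots> \<le> (1 - a (Suc m)) * supnorm (\<lambda>s. x m s - x 0 s) + a (Suc m) * supnorm (\<lambda>s. S (x m) s - x 0 s)"
        unfolding rec using a01 by (intro supnorm_conv) auto
      also have "\<dots> = (1 - a (Suc m)) * supnorm (\<lambda>s. x 0 s - x m s) + a (Suc m) * supnorm (\<lambda>s. x 0 s - S (x m) s)"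
        by (simp only: supnorm_sym[of "x m" "x 0"] supnorm_sym[of "S (x m)" "x 0"])
      also have "\<dots> \<le> (1 - a (Suc m)) * (2 * R * Th a 0 m 0) + a (Suc m) * (2 * R * Th a 0 m 1)"
        using outer[of 0] a01[of "Suc m"] by (intro add_mono mult_left_mono) auto
      also have "\<dots> = 2 * R * Th a 0 (Suc m) 0"
        by (rule comb) (use Th_R1'[of 0 "Suc m" a] in simp)
      finally show ?thesis .
    qed
    show ?case using X Y by simp
  next
    case (Suc p)
    have ih: "supnorm (\<lambda>s. x p s - S (x (Suc m)) s) \<le> 2 * R * Th a p (Suc m) 1
              \<and> supnorm (\<lambda>s. x p s - x (Suc m) s) \<le> 2 * R * Th a p (Suc m) 0"
      using Suc.IH Suc.prems by simp
    have Y: "supnorm (\<lambda>s. x (Suc p) s - S (x (Suc m)) s) \<le> 2 * R * Th a (Suc p) (Suc m) 1"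
    proof -
      have "supnorm (\<lambda>s. x (Suc p) s - S (x (Suc m)) s)
          \<le> (1 - a (Suc p)) * supnorm (\<lambda>s. x p s - S (x (Suc m)) s) + a (Suc p) * supnorm (\<lambda>s. S (x p) s - S (x (Suc m)) s)"
        unfolding rec using a01 by (intro supnorm_conv) auto
      also have "\<dots> \<le> (1 - a (Suc p)) * (2 * R * Th a p (Suc m) 1) + a (Suc p) * (2 * R * Th a p (Suc m) 0)"
        using ih ne[of "x p" "x (Suc m)"] a01[of "Suc p"] by (intro add_mono mult_left_mono) auto
      also have "\<dots> = 2 * R * Th a (Suc p) (Suc m) 1"
        by (rule comb) (use Th_R2'[of p "Suc m" a] Suc.prems in simp)
      finally show ?thesis .
    qed
    have X: "supnorm (\<lambda>s. x (Suc p) s - x (Suc m) s) \<le> 2 * R * Th a (Suc p) (Suc m) 0"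
    proof (cases "Suc p = Suc m")
      case True
      have z: "supnorm (\<lambda>s. x (Suc p) s - x (Suc p) s) = 0" by (simp add: supnorm_def)
      then show ?thesis using Th_base0[of a "Suc p"] True by simp
    next
      case False
      then have pm: "Suc p \<le> m" using Suc.prems by simp
      have "supnorm (\<lambda>s. x (Suc p) s - x (Suc m) s) = supnorm (\<lambda>s. x (Suc m) s - x (Suc p) s)" by (rule supnorm_sym)
      also have "\<dots> \<le> (1 - a (Suc m)) * supnorm (\<lambda>s. x m s - x (Suc p) s) + a (Suc m) * supnorm (\<lambda>s. S (x m) s - x (Suc p) s)"
        unfolding rec[of m] using a01 by (intro supnorm_conv) auto
      also have "\<dots> = (1 - a (Suc m)) * supnorm (\<lambda>s. x (Suc p) s - x m s) + a (Suc m) * supnorm (\<lambda>s. x (Suc p) s - S (x m) s)"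
        by (simp only: supnorm_sym[of "x m" "x (Suc p)"] supnorm_sym[of "S (x m)" "x (Suc p)"])
      also have "\<dots> \<le> (1 - a (Suc m)) * (2 * R * Th a (Suc p) m 0) + a (Suc m) * (2 * R * Th a (Suc p) m 1)"
        using outer[OF pm] a01[of "Suc m"] by (intro add_mono mult_left_mono) auto
      also have "\<dots> = 2 * R * Th a (Suc p) (Suc m) 0"
        by (rule comb) (use Th_R1'[of "Suc p" "Suc m" a] pm in simp)
      finally show ?thesis .
    qed
    show ?case using X Y by simp
  qed
qed

lemma fourier_final:
  assumes a01: "\<And>i. 0 \<le> a i \<and> a i \<le> 1"
    and spos: "0 < (\<Sum>i\<in>{1..n}. a i * (1 - a i))"
  shows "Th a n n 1 \<le> 1 / sqrt (pi * (\<Sum>i\<in>{1..n}. a i * (1 - a i)))"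
proof -
  define s where "s = (\<Sum>i\<in>{1..n}. a i * (1 - a i))"
  have sp: "0 < s" using spos s_def by simp
  have D1: "Bf a n 0 1 t = 1 + cos t" for t
    using Dn_S[of 0 t] by simp
  have phi_le: "phi a n t \<le> exp (- (4 * s) * (sin (t/2))\<^sup>2)" for t
  proof -
    have sc: "1 - cos t = 2 * (sin (t/2))\<^sup>2"
      using cos_double_sin[of "t/2"] by simp
    have "phi a n t = (\<Prod>i\<in>{1..n}. 1 - 4 * (a i * (1 - a i)) * (sin (t/2))\<^sup>2)"
      unfolding phi_def sc by (simp add: algebra_simps)
    also have "\<dots> \<le> (\<Prod>i\<in>{1..n}. exp (- (4 * (a i * (1 - a i)) * (sin (t/2))\<^sup>2)))"
    proof (rule prod_mono, rule conjI)
      fix i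
      have b0: "0 \<le> a i * (1 - a i)" using a01[of i] by simp
      have b1: "a i * (1 - a i) \<le> 1/4"
      proof -
        have "0 \<le> (a i - 1/2)\<^sup>2" by simp
        then show ?thesis by (simp add: power2_eq_square algebra_simps)
      qed
      have s1: "(sin (t/2))\<^sup>2 \<le> 1" using sin_cos_squared_add[of "t/2"] by (smt (verit) zero_le_power2)
      have "4 * (a i * (1 - a i)) * (sin (t/2))\<^sup>2 \<le> 1 * 1"
        using b0 b1 s1 by (intro mult_mono) auto
      then show "0 \<le> 1 - 4 * (a i * (1 - a i)) * (sin (t/2))\<^sup>2" by simp
      show "1 - 4 * (a i * (1 - a i)) * (sin (t/2))\<^sup>2 \<le> exp (- (4 * (a i * (1 - a i)) * (sin (t/2))\<^sup>2))"
        using exp_ge_add_one_self[of "- (4 * (a i * (1 - a i)) * (sin (t/2))\<^sup>2)"] by simp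
    qed
    also have "\<dots> = exp (\<Sum>i\<in>{1..n}. - (4 * (a i * (1 - a i)) * (sin (t/2))\<^sup>2))"
      by (simp add: exp_sum)
    also have "(\<Sum>i\<in>{1..n}. - (4 * (a i * (1 - a i)) * (sin (t/2))\<^sup>2)) = - (4 * s) * (sin (t/2))\<^sup>2"
    proof -
      have "(\<Sum>i\<in>{1..n}. - (4 * (a i * (1 - a i)) * (sin (t/2))\<^sup>2)) = (\<Sum>i\<in>{1..n}. (- 4 * (sin (t/2))\<^sup>2) * (a i * (1 - a i)))"
        by (rule sum.cong) (simp_all add: algebra_simps)
      also have "\<dots> = (- 4 * (sin (t/2))\<^sup>2) * s" unfolding s_def by (rule sum_distrib_left[symmetric])
      finally show ?thesis by (simp add: algebra_simps)
    qed
    finally show ?thesis .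
  qed
  have "integral {-pi..pi} (\<lambda>t. phi a n t * Bf a n (n - n) 1 t)
      \<le> integral {-pi..pi} (\<lambda>t. exp (- (4 * s) * (sin (t/2))\<^sup>2) * (1 + cos t))"
  proof (rule integral_le)
    show "(\<lambda>t. phi a n t * Bf a n (n - n) 1 t) integrable_on {-pi..pi}" by (rule integrable_prod_phi)
    show "(\<lambda>t. exp (- (4 * s) * (sin (t/2))\<^sup>2) * (1 + cos t)) integrable_on {-pi..pi}"
      by (intro integrable_continuous_interval continuous_intros) auto
    fix t :: real
    have "0 \<le> 1 + cos t" using cos_ge_minus_one[of t] by linarith
    then show "phi a n t * Bf a n (n - n) 1 t \<le> exp (- (4 * s) * (sin (t/2))\<^sup>2) * (1 + cos t)"
      using phi_le[of t] D1[of t] by (simp add: mult_right_mono)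
  qed
  also have "\<dots> \<le> 4 * sqrt (pi / (4 * s))"
    using J_bound[of "4 * s"] sp by simp
  finally have I: "integral {-pi..pi} (\<lambda>t. phi a n t * Bf a n (n - n) 1 t) \<le> 4 * sqrt (pi / (4 * s))" .
  have "Th a n n 1 \<le> 4 * sqrt (pi / (4 * s)) / (2 * pi)"
    unfolding Th_def using I by (intro divide_right_mono) auto
  also have "4 * sqrt (pi / (4 * s)) / (2 * pi) = 1 / sqrt (pi * s)"
  proof -
    have "sqrt (pi / (4 * s)) = sqrt pi / (2 * sqrt s)"
      by (simp add: real_sqrt_divide real_sqrt_mult)
    moreover have "sqrt pi * sqrt pi = pi" by simp
    ultimately show ?thesis using sp by (simp add: real_sqrt_mult field_simps)
  qed
  finally show ?thesis unfolding s_def .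
qed


definition QA :: "('s::finite \<Rightarrow> 'a::finite \<Rightarrow> 's \<Rightarrow> real) \<Rightarrow> ('s \<Rightarrow> 'a \<Rightarrow> real) \<Rightarrow> 's \<Rightarrow> 'a \<Rightarrow> ('s \<Rightarrow> real) \<Rightarrow> real" where
  "QA P r s a V = r s a + (\<Sum>s'\<in>UNIV. P s a s' * V s')"

definition TG :: "('s::finite \<Rightarrow> 'a::finite \<Rightarrow> 's \<Rightarrow> real) \<Rightarrow> ('s \<Rightarrow> 'a \<Rightarrow> real) \<Rightarrow> ('s \<Rightarrow> real) \<Rightarrow> ('s \<Rightarrow> real) \<Rightarrow> 's \<Rightarrow> real" where
  "TG P r g V s = Max ((\<lambda>a. QA P r s a V) ` {a. (\<Sum>s'\<in>UNIV. P s a s' * g s') = g s})"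

lemma T_opt_QA: "T_opt P r V s = Max (range (\<lambda>a. QA P r s a V))"
  unfolding T_opt_def QA_def by simp

lemma T_ge: "QA P r s a V \<le> T_opt P r V s"
  unfolding T_opt_QA by (rule Max_ge) auto

lemma T_le: "(\<And>a. QA P r s a V \<le> M) \<Longrightarrow> T_opt P r V s \<le> M"
  unfolding T_opt_QA by (subst Max_le_iff) auto

context
  fixes P :: "'s::finite \<Rightarrow> 'a::finite \<Rightarrow> 's \<Rightarrow> real" and r g h
  assumes mdp: "is_mdp P" and sol: "mod_bellman P r g h"
begin

lemma P_nonneg: "0 \<le> P s a s'" using mdp unfolding is_mdp_def by auto
lemma P_sum1: "(\<Sum>s'\<in>UNIV. P s a s') = 1" using mdp unfolding is_mdp_def by auto

lemma P_lin: "(\<Sum>s'\<in>UNIV. P s a s' * (u s' + c * v s')) = (\<Sum>s'\<in>UNIV. P s a s' * u s') + c * (\<Sum>s'\<in>UNIV. P s a s' * v s')"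
  by (simp add: sum.distrib sum_distrib_left algebra_simps)

lemma P_bound: "\<bar>\<Sum>s'\<in>UNIV. P s a s' * u s'\<bar> \<le> supnorm u"
proof -
  have "\<bar>\<Sum>s'\<in>UNIV. P s a s' * u s'\<bar> \<le> (\<Sum>s'\<in>UNIV. \<bar>P s a s' * u s'\<bar>)" by (rule sum_abs)
  also have "\<dots> \<le> (\<Sum>s'\<in>UNIV. P s a s' * supnorm u)"
    by (intro sum_mono) (simp add: abs_mult P_nonneg mult_left_mono supnorm_ge)
  also have "\<dots> = supnorm u" by (simp add: sum_distrib_right[symmetric] P_sum1)
  finally show ?thesis .
qed

lemma QA_diff: "\<bar>QA P r s a u - QA P r s a v\<bar> \<le> supnorm (\<lambda>s. u s - v s)"
proof -
  have "QA P r s a u - QA P r s a v = (\<Sum>s'\<in>UNIV. P s a s' * (u s' - v s'))"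
    unfolding QA_def by (simp add: sum_subtractf algebra_simps)
  then show ?thesis using P_bound[of s a "\<lambda>s. u s - v s"] by simp
qed

lemma QA_shift: "QA P r s a (\<lambda>s. u s + c * g s) = QA P r s a u + c * (\<Sum>s'\<in>UNIV. P s a s' * g s')"
  unfolding QA_def using P_lin[of s a u c g] by simp

lemma Pg_le: "(\<Sum>s'\<in>UNIV. P s a s' * g s') \<le> g s"
proof -
  have "(\<Sum>s'\<in>UNIV. P s a s' * g s') \<le> (MAX a. (\<Sum>s'\<in>UNIV. P s a s' * g s'))" by (rule Max_ge) auto
  then show ?thesis using sol unfolding mod_bellman_def by auto
qed

lemma QAh_le: "QA P r s a h \<le> h s + g s"
proof -
  have "QA P r s a h \<le> (MAX a. r s a + (\<Sum>s'\<in>UNIV. P s a s' * h s'))" unfolding QA_def by (rule Max_ge) auto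
  then show ?thesis using sol unfolding mod_bellman_def by auto
qed

lemma d_ex: "\<exists>d. \<forall>s. (\<Sum>s'\<in>UNIV. P s (d s) s' * g s') = g s \<and> QA P r s (d s) h = h s + g s"
  using sol unfolding mod_bellman_def QA_def by auto

lemma G_ne: "\<exists>a. (\<Sum>s'\<in>UNIV. P s a s' * g s') = g s \<and> QA P r s a h = h s + g s"
  using d_ex by blast

lemma TG_le_T: "TG P r g V s \<le> T_opt P r V s"
  unfolding TG_def using G_ne[of s] by (subst Max_le_iff) (auto intro: T_ge)

lemma TG_ge: "(\<Sum>s'\<in>UNIV. P s a s' * g s') = g s \<Longrightarrow> QA P r s a V \<le> TG P r g V s"
  unfolding TG_def by (rule Max_ge) auto

lemma TG_le: "(\<And>a. (\<Sum>s'\<in>UNIV. P s a s' * g s') = g s \<Longrightarrow> QA P r s a V \<le> M) \<Longrightarrow> TG P r g V s \<le> M"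
  unfolding TG_def using G_ne[of s] by (subst Max_le_iff) auto

lemma TG_shift: "TG P r g (\<lambda>s. u s + c * g s) s = TG P r g u s + c * g s"
proof (rule antisym)
  show "TG P r g (\<lambda>s. u s + c * g s) s \<le> TG P r g u s + c * g s"
    by (rule TG_le) (simp add: QA_shift TG_ge)
  obtain a where a: "(\<Sum>s'\<in>UNIV. P s a s' * g s') = g s" using G_ne by blast
  have "TG P r g u s \<le> TG P r g (\<lambda>s. u s + c * g s) s - c * g s"
  proof (rule TG_le)
    fix b assume b: "(\<Sum>s'\<in>UNIV. P s b s' * g s') = g s"
    have "QA P r s b (\<lambda>s. u s + c * g s) \<le> TG P r g (\<lambda>s. u s + c * g s) s" by (rule TG_ge[OF b])
    then show "QA P r s b u \<le> TG P r g (\<lambda>s. u s + c * g s) s - c * g s" by (simp add: QA_shift b)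
  qed
  then show "TG P r g u s + c * g s \<le> TG P r g (\<lambda>s. u s + c * g s) s" by simp
qed

lemma TG_nonexp: "\<bar>TG P r g u s - TG P r g v s\<bar> \<le> supnorm (\<lambda>s. u s - v s)"
proof -
  have A: "TG P r g u s \<le> TG P r g v s + supnorm (\<lambda>s. u s - v s)" for u v
  proof (rule TG_le)
    fix a assume a: "(\<Sum>s'\<in>UNIV. P s a s' * g s') = g s"
    have "QA P r s a u \<le> QA P r s a v + supnorm (\<lambda>s. u s - v s)" using QA_diff[of s a u v] by simp
    also have "\<dots> \<le> TG P r g v s + supnorm (\<lambda>s. u s - v s)" using TG_ge[OF a, of v] by simp
    finally show "QA P r s a u \<le> TG P r g v s + supnorm (\<lambda>s. u s - v s)" .
  qed
  show ?thesis using A[of u v] A[of v u] supnorm_sym[of u v] by simp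
qed

lemma TG_h: "TG P r g h s = h s + g s"
proof (rule antisym)
  show "TG P r g h s \<le> h s + g s" by (rule TG_le) (rule QAh_le)
  obtain a where "(\<Sum>s'\<in>UNIV. P s a s' * g s') = g s" "QA P r s a h = h s + g s" using G_ne by blast
  then show "h s + g s \<le> TG P r g h s" using TG_ge by metis
qed

lemma Tshift_fix:
  assumes "0 \<le> c"
  shows "\<bar>T_opt P r (\<lambda>s. w s + c * g s) s - c * g s - g s - h s\<bar> \<le> supnorm (\<lambda>s. w s - h s)"
proof -
  let ?e = "supnorm (\<lambda>s. w s - h s)"
  have up: "T_opt P r (\<lambda>s. w s + c * g s) s \<le> h s + g s + ?e + c * g s"
  proof (rule T_le)
    fix a
    have "QA P r s a (\<lambda>s. w s + c * g s) = QA P r s a w + c * (\<Sum>s'\<in>UNIV. P s a s' * g s')" by (rule QA_shift)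
    also have "\<dots> \<le> QA P r s a h + ?e + c * g s"
      using QA_diff[of s a w h] Pg_le[of s a] assms by (intro add_mono mult_left_mono) auto
    also have "\<dots> \<le> h s + g s + ?e + c * g s" using QAh_le[of s a] by simp
    finally show "QA P r s a (\<lambda>s. w s + c * g s) \<le> h s + g s + ?e + c * g s" .
  qed
  obtain a where a: "(\<Sum>s'\<in>UNIV. P s a s' * g s') = g s" "QA P r s a h = h s + g s" using G_ne by blast
  have "h s + g s - ?e + c * g s \<le> QA P r s a (\<lambda>s. w s + c * g s)"
    using QA_shift[of s a w c] QA_diff[of s a w h] a by simp
  also have "\<dots> \<le> T_opt P r (\<lambda>s. w s + c * g s) s" by (rule T_ge)
  finally show ?thesis using up by simp
qed

end


lemma P_bound':
  assumes "is_mdp P"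
  shows "\<bar>\<Sum>s'\<in>UNIV. P s a s' * u s'\<bar> \<le> supnorm u"
proof -
  have "\<bar>\<Sum>s'\<in>UNIV. P s a s' * u s'\<bar> \<le> (\<Sum>s'\<in>UNIV. \<bar>P s a s' * u s'\<bar>)" by (rule sum_abs)
  also have "\<dots> \<le> (\<Sum>s'\<in>UNIV. P s a s' * supnorm u)"
    using assms unfolding is_mdp_def by (intro sum_mono) (simp add: abs_mult mult_left_mono supnorm_ge)
  also have "\<dots> = supnorm u" using assms unfolding is_mdp_def by (simp add: sum_distrib_right[symmetric])
  finally show ?thesis .
qed

lemma Ppol_alt: "P_pol P \<sigma> v s = (\<Sum>a\<in>UNIV. \<sigma> s a * (\<Sum>s'\<in>UNIV. P s a s' * v s'))"
  unfolding P_pol_def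
  by (simp add: sum_distrib_right sum_distrib_left mult.assoc) (rule sum.swap)

lemma Tpol_QA: "T_pol P r \<sigma> V s = (\<Sum>a\<in>UNIV. \<sigma> s a * QA P r s a V)"
  unfolding T_pol_def r_pol_def Ppol_alt QA_def by (simp add: sum.distrib distrib_left)

lemma Ppol_add: "P_pol P \<sigma> (\<lambda>s. u s + v s) = (\<lambda>s. P_pol P \<sigma> u s + P_pol P \<sigma> v s)"
  unfolding P_pol_def by (simp add: sum.distrib distrib_left fun_eq_iff)

lemma Ppol_diff: "P_pol P \<sigma> (\<lambda>s. u s - v s) = (\<lambda>s. P_pol P \<sigma> u s - P_pol P \<sigma> v s)"
  unfolding P_pol_def by (simp add: sum_subtractf right_diff_distrib fun_eq_iff)

lemma Ppow_add: "(P_pol P \<sigma> ^^ t) (\<lambda>s. u s + v s) = (\<lambda>s. (P_pol P \<sigma> ^^ t) u s + (P_pol P \<sigma> ^^ t) v s)"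
  by (induction t) (simp_all add: Ppol_add)

lemma Ppow_diff: "(P_pol P \<sigma> ^^ t) (\<lambda>s. u s - v s) = (\<lambda>s. (P_pol P \<sigma> ^^ t) u s - (P_pol P \<sigma> ^^ t) v s)"
  by (induction t) (simp_all add: Ppol_diff)

lemma Ppow_fix: "P_pol P \<sigma> g = g \<Longrightarrow> (P_pol P \<sigma> ^^ t) g = g"
  by (induction t) simp_all

lemma Ppol_bound:
  assumes "is_mdp P" "is_policy \<sigma>"
  shows "\<bar>P_pol P \<sigma> u s\<bar> \<le> supnorm u"
proof -
  have "\<bar>P_pol P \<sigma> u s\<bar> \<le> (\<Sum>a\<in>UNIV. \<bar>\<sigma> s a * (\<Sum>s'\<in>UNIV. P s a s' * u s')\<bar>)"
    unfolding Ppol_alt by (rule sum_abs)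
  also have "\<dots> \<le> (\<Sum>a\<in>UNIV. \<sigma> s a * supnorm u)"
  proof (rule sum_mono)
    fix a
    have "0 \<le> \<sigma> s a" using assms(2) unfolding is_policy_def by auto
    then show "\<bar>\<sigma> s a * (\<Sum>s'\<in>UNIV. P s a s' * u s')\<bar> \<le> \<sigma> s a * supnorm u"
      using P_bound'[OF assms(1), of s a u]
      by (simp add: abs_mult mult_left_mono)
  qed
  also have "\<dots> = supnorm u" using assms(2) unfolding is_policy_def by (simp add: sum_distrib_right[symmetric])
  finally show ?thesis .
qed

lemma Ppow_bound:
  assumes "is_mdp P" "is_policy \<sigma>"
  shows "\<bar>(P_pol P \<sigma> ^^ t) u s\<bar> \<le> supnorm u"
proof (induction t arbitrary: s)
  case 0 then show ?case by (simp add: supnorm_ge)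
next
  case (Suc t)
  have "\<bar>(P_pol P \<sigma> ^^ Suc t) u s\<bar> \<le> supnorm ((P_pol P \<sigma> ^^ t) u)"
    using Ppol_bound[OF assms] by simp
  also have "\<dots> \<le> supnorm u" by (rule supnorm_le) (rule Suc.IH)
  finally show ?case .
qed


lemma abs_conv: "0 \<le> (l::real) \<Longrightarrow> l \<le> 1 \<Longrightarrow> \<bar>l*x + (1-l)*y\<bar> \<le> l*\<bar>x\<bar> + (1-l)*\<bar>y\<bar>"
proof -
  assume "0 \<le> l" "l \<le> 1"
  moreover have "\<bar>l*x + (1-l)*y\<bar> \<le> \<bar>l*x\<bar> + \<bar>(1-l)*y\<bar>" by (rule abs_triangle_ineq)
  ultimately show ?thesis by (simp add: abs_mult)
qed

lemma real_of_ereal_between: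
  assumes "ereal a \<le> L" "L \<le> ereal b"
  shows "a \<le> real_of_ereal L \<and> real_of_ereal L \<le> b"
  using assms by (cases L) auto

lemma liminf_close:
  fixes f :: "nat \<Rightarrow> real"
  assumes "\<And>T. T \<ge> 1 \<Longrightarrow> \<bar>f T - c\<bar> \<le> e + C / real T"
  shows "\<bar>c - real_of_ereal (liminf (\<lambda>T. ereal (f T)))\<bar> \<le> e"
proof -
  have ev1: "eventually (\<lambda>T. ereal (c - e - C / real T) \<le> ereal (f T)) sequentially"
    unfolding eventually_sequentially
  proof (intro exI[of _ 1] allI impI)
    fix T :: nat assume "1 \<le> T"
    then have "\<bar>f T - c\<bar> \<le> e + C / real T" by (rule assms)
    then show "ereal (c - e - C / real T) \<le> ereal (f T)" by (simp add: abs_le_iff)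
  qed
  have ev2: "eventually (\<lambda>T. ereal (f T) \<le> ereal (c + e + C / real T)) sequentially"
    unfolding eventually_sequentially
  proof (intro exI[of _ 1] allI impI)
    fix T :: nat assume "1 \<le> T"
    then have "\<bar>f T - c\<bar> \<le> e + C / real T" by (rule assms)
    then show "ereal (f T) \<le> ereal (c + e + C / real T)" by (simp add: abs_le_iff)
  qed
  have t1: "(\<lambda>T. ereal (c - e - C / real T)) \<longlonglongrightarrow> ereal (c - e)"
    by (intro tendsto_ereal) (auto intro!: tendsto_eq_intros lim_const_over_n)
  have t2: "(\<lambda>T. ereal (c + e + C / real T)) \<longlonglongrightarrow> ereal (c + e)"
    by (intro tendsto_ereal) (auto intro!: tendsto_eq_intros lim_const_over_n)
  have "ereal (c - e) = liminf (\<lambda>T. ereal (c - e - C / real T))"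
    using lim_imp_Liminf[OF _ t1] by simp
  also have "\<dots> \<le> liminf (\<lambda>T. ereal (f T))" by (rule Liminf_mono[OF ev1])
  finally have l1: "ereal (c - e) \<le> liminf (\<lambda>T. ereal (f T))" .
  have "liminf (\<lambda>T. ereal (f T)) \<le> liminf (\<lambda>T. ereal (c + e + C / real T))" by (rule Liminf_mono[OF ev2])
  also have "\<dots> = ereal (c + e)" using lim_imp_Liminf[OF _ t2] by simp
  finally have l2: "liminf (\<lambda>T. ereal (f T)) \<le> ereal (c + e)" .
  show ?thesis using real_of_ereal_between[OF l1 l2] by (simp add: abs_le_iff)
qed

context
  fixes P :: "'s::finite \<Rightarrow> 'a::finite \<Rightarrow> 's \<Rightarrow> real"
    and r :: "'s \<Rightarrow> 'a \<Rightarrow> real"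
    and g h :: "'s \<Rightarrow> real"
    and lam :: "nat \<Rightarrow> real"
    and V :: "nat \<Rightarrow> 's \<Rightarrow> real"
    and pol :: "nat \<Rightarrow> 's \<Rightarrow> 'a \<Rightarrow> real"
  assumes mdp: "is_mdp P"
    and sol: "mod_bellman P r g h"
    and lam_pos: "\<And>j. j \<ge> 1 \<Longrightarrow> 0 < lam j"
    and lam_lt1: "\<And>j. j \<ge> 1 \<Longrightarrow> lam j < 1"
    and lam_limsup: "limsup (\<lambda>j. ereal (lam j)) < 1"
    and V_rec: "\<And>k. k \<ge> 1 \<Longrightarrow>
        V k = (\<lambda>s. lam k * V (k - 1) s + (1 - lam k) * T_opt P r (V (k - 1)) s)"
    and pol_pol: "\<And>k. is_policy (pol k)"
    and greedy: "\<And>k. T_pol P r (pol k) (V k) = T_opt P r (V k)"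
begin

definition cc :: "nat \<Rightarrow> real" where "cc k = (\<Sum>i\<in>{1..k}. (1 - lam i))"
definition W :: "nat \<Rightarrow> 's \<Rightarrow> real" where "W k s = V k s - cc k * g s"
definition R0 :: real where "R0 = supnorm (\<lambda>s. V 0 s - h s)"

lemma cc_Suc: "cc (Suc k) = cc k + (1 - lam (Suc k))"
  unfolding cc_def by simp

lemma cc_nonneg: "0 \<le> cc k"
  unfolding cc_def using lam_lt1 by (intro sum_nonneg) (auto simp: less_imp_le)

lemma V_W: "V k = (\<lambda>s. W k s + cc k * g s)"
  unfolding W_def by simp

lemma W_rec: "W (Suc k) s = lam (Suc k) * W k s + (1 - lam (Suc k)) * (T_opt P r (V k) s - cc k * g s - g s)"
proof -
  have "V (Suc k) s = lam (Suc k) * V k s + (1 - lam (Suc k)) * T_opt P r (V k) s"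
    using V_rec[of "Suc k"] by simp
  then show ?thesis unfolding W_def cc_Suc by (simp add: algebra_simps)
qed

lemma W_bdd: "supnorm (\<lambda>s. W k s - h s) \<le> R0"
proof (induction k)
  case 0 then show ?case by (simp add: W_def cc_def R0_def)
next
  case (Suc k)
  show ?case
  proof (rule supnorm_le)
    fix s
    let ?l = "lam (Suc k)"
    have l0: "0 \<le> ?l" "?l \<le> 1" using lam_pos[of "Suc k"] lam_lt1[of "Suc k"] by auto
    have "W (Suc k) s - h s = ?l * (W k s - h s) + (1 - ?l) * (T_opt P r (\<lambda>s. W k s + cc k * g s) s - cc k * g s - g s - h s)"
      unfolding W_rec V_W[of k] by (simp add: algebra_simps)
    then have "\<bar>W (Suc k) s - h s\<bar> \<le> ?l * \<bar>W k s - h s\<bar> + (1 - ?l) * \<bar>T_opt P r (\<lambda>s. W k s + cc k * g s) s - cc k * g s - g s - h s\<bar>"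
      using abs_conv[OF l0] by simp
    also have "\<dots> \<le> ?l * R0 + (1 - ?l) * R0"
      using Tshift_fix[OF mdp sol cc_nonneg[of k], where w="W k" and s=s] supnorm_ge[of "\<lambda>s. W k s - h s" s] Suc l0
      by (intro add_mono mult_left_mono) auto
    finally show "\<bar>W (Suc k) s - h s\<bar> \<le> R0" by (simp add: algebra_simps)
  qed
qed

lemma R0_nonneg: "0 \<le> R0" unfolding R0_def by (rule supnorm_nonneg)

lemma greedy_sum: "(\<Sum>a\<in>UNIV. pol k s a * QA P r s a (V k)) = T_opt P r (V k) s"
  using greedy[of k] Tpol_QA[of P r "pol k" "V k" s] by (metis)

lemma pol_nonneg: "0 \<le> pol k s a" using pol_pol[of k] unfolding is_policy_def by auto
lemma pol_sum: "(\<Sum>a\<in>UNIV. pol k s a) = 1" using pol_pol[of k] unfolding is_policy_def by auto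

lemma greedy_support: "pol k s a \<noteq> 0 \<Longrightarrow> QA P r s a (V k) = T_opt P r (V k) s"
proof -
  assume ne: "pol k s a \<noteq> 0"
  have "(\<Sum>a\<in>UNIV. pol k s a * (T_opt P r (V k) s - QA P r s a (V k))) = 0"
    using greedy_sum[of k s] pol_sum[of k s]
    by (simp add: right_diff_distrib sum_subtractf sum_distrib_right[symmetric])
  moreover have "\<forall>a. 0 \<le> pol k s a * (T_opt P r (V k) s - QA P r s a (V k))"
  proof
    fix a
    show "0 \<le> pol k s a * (T_opt P r (V k) s - QA P r s a (V k))"
      using pol_nonneg[of k s a] T_ge[of P r s a "V k"] by (intro mult_nonneg_nonneg) auto
  qed
  ultimately have "\<forall>a. pol k s a * (T_opt P r (V k) s - QA P r s a (V k)) = 0"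
    by (simp add: sum_nonneg_eq_0_iff)
  then show ?thesis using ne by (metis eq_iff_diff_eq_0 mult_eq_0_iff)
qed

definition Pg :: "'s \<Rightarrow> 'a \<Rightarrow> real" where "Pg s a = (\<Sum>s'\<in>UNIV. P s a s' * g s')"

lemma gap: "\<exists>\<delta>>0. \<forall>s a. Pg s a < g s \<longrightarrow> Pg s a \<le> g s - \<delta>"
proof -
  define D where "D = (\<lambda>(s,a). g s - Pg s a) ` {(s,a). Pg s a < g s}"
  have fD: "finite D" unfolding D_def by (rule finite_imageI, rule finite_subset[of _ UNIV]) auto
  show ?thesis
  proof (cases "D = {}")
    case True
    then show ?thesis unfolding D_def by (intro exI[of _ 1]) auto
  next
    case False
    have pos: "\<forall>x\<in>D. 0 < x" unfolding D_def by auto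
    have "0 < Min D" using fD False pos by simp
    moreover have "\<forall>s a. Pg s a < g s \<longrightarrow> Pg s a \<le> g s - Min D"
    proof (intro allI impI)
      fix s a assume "Pg s a < g s"
      then have "g s - Pg s a \<in> D" unfolding D_def by force
      then have "Min D \<le> g s - Pg s a" using fD by simp
      then show "Pg s a \<le> g s - Min D" by simp
    qed
    ultimately show ?thesis by blast
  qed
qed

lemma cc_grow:
  assumes "0 < \<delta>"
  shows "\<exists>K. \<forall>k\<ge>K. 2 * R0 < cc k * \<delta>"
proof -
  obtain z where z1: "limsup (\<lambda>j. ereal (lam j)) < ereal z" and z2: "ereal z < 1"
    using ereal_dense2[OF lam_limsup] by blast
  have "eventually (\<lambda>j. ereal (lam j) < ereal z) sequentially"
    using Limsup_lessD[OF z1] .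
  then obtain N where N: "\<And>j. j \<ge> N \<Longrightarrow> lam j < z" unfolding eventually_sequentially by auto
  have z1': "z < 1" using z2 by simp
  define N' where "N' = max N 1"
  have grow: "real (k - N') * (1 - z) \<le> cc k" if "N' \<le> k" for k
    using that
  proof (induction k rule: dec_induct)
    case base then show ?case using cc_nonneg by simp
  next
    case (step k)
    have "lam (Suc k) < z" using N[of "Suc k"] step N'_def by simp
    then have "real (Suc k - N') * (1 - z) = real (k - N') * (1 - z) + (1 - z)"
      using step by (simp add: Suc_diff_le algebra_simps)
    also have "\<dots> \<le> cc k + (1 - lam (Suc k))" using step.IH \<open>lam (Suc k) < z\<close> by simp
    finally show ?case by (simp add: cc_Suc)
  qed
  define q where "q = 2 * R0 / ((1 - z) * \<delta>)"
  have q0: "0 \<le> q" unfolding q_def using R0_nonneg z1' assms by simp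
  define K where "K = N' + nat (ceiling q) + 1"
  have "2 * R0 < cc k * \<delta>" if "K \<le> k" for k
  proof -
    have "real (k - N') \<ge> q + 1" using that unfolding K_def
      using of_nat_ceiling[of q] q0 by linarith
    then have "real (k - N') * ((1 - z) * \<delta>) \<ge> (q + 1) * ((1 - z) * \<delta>)"
      using z1' assms by (intro mult_right_mono) auto
    moreover have "(q + 1) * ((1 - z) * \<delta>) = 2 * R0 + (1 - z) * \<delta>"
      unfolding q_def using z1' assms by (simp add: field_simps)
    moreover have "0 < (1 - z) * \<delta>" using z1' assms by simp
    moreover have "real (k - N') * (1 - z) * \<delta> \<le> cc k * \<delta>"
      using grow[of k] that assms unfolding K_def by (intro mult_right_mono) auto
    ultimately show ?thesis by (simp add: mult.assoc)
  qed
  then show ?thesis by blast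
qed

lemma bad_zero:
  assumes gp: "\<forall>s a. Pg s a < g s \<longrightarrow> Pg s a \<le> g s - \<delta>"
    and big: "2 * R0 < cc k * \<delta>"
    and ne: "pol k s a \<noteq> 0"
  shows "Pg s a = g s"
proof (rule ccontr)
  assume "Pg s a \<noteq> g s"
  then have lt: "Pg s a < g s" using Pg_le[OF mdp sol, of s a] unfolding Pg_def by simp
  then have le: "Pg s a \<le> g s - \<delta>" using gp by blast
  have e: "\<bar>QA P r s b (W k) - QA P r s b h\<bar> \<le> R0" for b
    by (rule order_trans[OF QA_diff[OF mdp sol] W_bdd[of k]])
  have "QA P r s a (V k) = QA P r s a (W k) + cc k * Pg s a"
    unfolding V_W[of k] Pg_def by (rule QA_shift[OF mdp sol])
  also have "\<dots> \<le> QA P r s a h + R0 + cc k * (g s - \<delta>)"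
    using e[of a] le cc_nonneg[of k] by (intro add_mono mult_left_mono) auto
  also have "\<dots> \<le> h s + g s + R0 + cc k * (g s - \<delta>)" using QAh_le[OF mdp sol, of s a] by simp
  finally have up: "QA P r s a (V k) \<le> h s + g s + R0 + cc k * (g s - \<delta>)" .
  obtain b where b: "Pg s b = g s" "QA P r s b h = h s + g s" using G_ne[OF mdp sol, of s] unfolding Pg_def by blast
  have "h s + g s - R0 + cc k * g s \<le> QA P r s b (W k) + cc k * Pg s b"
    using e[of b] b by simp
  also have "\<dots> = QA P r s b (V k)"
    unfolding V_W[of k] Pg_def by (rule QA_shift[OF mdp sol, symmetric])
  also have "\<dots> \<le> T_opt P r (V k) s" by (rule T_ge)
  also have "\<dots> = QA P r s a (V k)" using greedy_support[OF ne] by simp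
  finally have "h s + g s - R0 + cc k * g s \<le> h s + g s + R0 + cc k * (g s - \<delta>)" using up by linarith
  then show False using big by (simp add: algebra_simps)
qed

lemma fix_of_support:
  assumes "\<And>a. pol k s a \<noteq> 0 \<Longrightarrow> Pg s a = g s"
  shows "P_pol P (pol k) g s = g s"
proof -
  have "P_pol P (pol k) g s = (\<Sum>a\<in>UNIV. pol k s a * Pg s a)" unfolding Ppol_alt Pg_def ..
  also have "\<dots> = (\<Sum>a\<in>UNIV. pol k s a * g s)"
    by (rule sum.cong) (use assms in auto)
  also have "\<dots> = g s" using pol_sum[of k s] by (simp add: sum_distrib_right[symmetric])
  finally show ?thesis .
qed

lemma K_exists: "\<exists>K. \<forall>k\<ge>K. P_pol P (pol k) g = g"
proof -
  obtain \<delta> where d0: "0 < \<delta>" and gp: "\<forall>s a. Pg s a < g s \<longrightarrow> Pg s a \<le> g s - \<delta>" using gap by blast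
  obtain K where K: "\<forall>k\<ge>K. 2 * R0 < cc k * \<delta>" using cc_grow[OF d0] by blast
  have "P_pol P (pol k) g = g" if "K \<le> k" for k
  proof
    fix s
    show "P_pol P (pol k) g s = g s"
      by (rule fix_of_support) (rule bad_zero[OF gp], use K that in auto)
  qed
  then show ?thesis by blast
qed

lemma support_of_fix:
  assumes fx: "P_pol P (pol k) g = g" and ne: "pol k s a \<noteq> 0"
  shows "Pg s a = g s"
proof -
  have "(\<Sum>a\<in>UNIV. pol k s a * (g s - Pg s a)) = g s - P_pol P (pol k) g s"
    unfolding Ppol_alt Pg_def using pol_sum[of k s]
    by (simp add: right_diff_distrib sum_subtractf sum_distrib_right[symmetric])
  also have "\<dots> = 0" using fx by simp
  finally have z: "(\<Sum>a\<in>UNIV. pol k s a * (g s - Pg s a)) = 0" .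
  have nn: "\<forall>a. 0 \<le> pol k s a * (g s - Pg s a)"
  proof
    fix a show "0 \<le> pol k s a * (g s - Pg s a)"
      using pol_nonneg[of k s a] Pg_le[OF mdp sol, of s a] unfolding Pg_def by (intro mult_nonneg_nonneg) auto
  qed
  have "pol k s a * (g s - Pg s a) = 0" using z nn by (simp add: sum_nonneg_eq_0_iff)
  then show ?thesis using ne by simp
qed

lemma T_eq_TG:
  assumes fx: "P_pol P (pol k) g = g"
  shows "T_opt P r (V k) s = TG P r g (V k) s"
proof (rule antisym)
  show "TG P r g (V k) s \<le> T_opt P r (V k) s" by (rule TG_le_T[OF mdp sol])
  have "T_opt P r (V k) s = (\<Sum>a\<in>UNIV. pol k s a * QA P r s a (V k))" using greedy_sum by simp
  also have "\<dots> \<le> (\<Sum>a\<in>UNIV. pol k s a * TG P r g (V k) s)"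
  proof (rule sum_mono)
    fix a
    show "pol k s a * QA P r s a (V k) \<le> pol k s a * TG P r g (V k) s"
    proof (cases "pol k s a = 0")
      case False
      then have "Pg s a = g s" by (rule support_of_fix[OF fx])
      then have "QA P r s a (V k) \<le> TG P r g (V k) s" unfolding Pg_def by (rule TG_ge[OF mdp sol])
      then show ?thesis using pol_nonneg[of k s a] by (intro mult_left_mono)
    qed simp
  qed
  also have "\<dots> = TG P r g (V k) s" using pol_sum[of k s] by (simp add: sum_distrib_right[symmetric])
  finally show "T_opt P r (V k) s \<le> TG P r g (V k) s" .
qed

lemma T_eq_TG_W:
  assumes fx: "P_pol P (pol k) g = g"
  shows "T_opt P r (V k) s = TG P r g (W k) s + cc k * g s"
  using T_eq_TG[OF fx, of s] unfolding V_W[of k] TG_shift[OF mdp sol] .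

lemma main_KM:
  assumes Kfix: "\<forall>k\<ge>K. P_pol P (pol k) g = g" and Kk: "K < k"
  shows "supnorm (\<lambda>s. T_opt P r (V k) s - V k s - g s)
           \<le> 2 * supnorm (\<lambda>s. V 0 s - h s) / sqrt (pi * (\<Sum>i=K+1..k. lam i * (1 - lam i)))"
proof -
  define S where "S = (\<lambda>u s. TG P r g u s - g s)"
  define x where "x = (\<lambda>j. W (K + j))"
  define a where "a = (\<lambda>j. if j = 0 then 0 else 1 - lam (K + j))"
  define n where "n = k - K"
  have kn: "k = K + n" and n1: "1 \<le> n" using Kk n_def by auto
  have ne: "supnorm (\<lambda>s. S u s - S v s) \<le> supnorm (\<lambda>s. u s - v s)" for u v
    by (rule supnorm_le) (simp add: S_def TG_nonexp[OF mdp sol])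
  have rec: "x (Suc j) = (\<lambda>s. (1 - a (Suc j)) * x j s + a (Suc j) * S (x j) s)" for j
  proof
    fix s
    have fxj: "P_pol P (pol (K + j)) g = g" using Kfix by simp
    have "x (Suc j) s = W (Suc (K + j)) s" by (simp add: x_def)
    also have "\<dots> = lam (Suc (K + j)) * W (K + j) s + (1 - lam (Suc (K + j))) * (TG P r g (W (K + j)) s - g s)"
      unfolding W_rec T_eq_TG_W[OF fxj] by simp
    also have "\<dots> = (1 - a (Suc j)) * x j s + a (Suc j) * S (x j) s"
      by (simp add: a_def x_def S_def)
    finally show "x (Suc j) s = (1 - a (Suc j)) * x j s + a (Suc j) * S (x j) s" .
  qed
  have a01: "0 \<le> a j \<and> a j \<le> 1" for j
    using lam_pos[of "K + j"] lam_lt1[of "K + j"] by (auto simp: a_def)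
  have Sh: "S h = h" by (simp add: S_def TG_h[OF mdp sol] fun_eq_iff)
  have bd: "supnorm (\<lambda>s. x 0 s - S (x m) s) \<le> 2 * R0" for m
  proof (rule supnorm_le)
    fix s
    have "\<bar>x 0 s - S (x m) s\<bar> \<le> \<bar>W K s - h s\<bar> + \<bar>S h s - S (x m) s\<bar>"
      using Sh by (simp add: x_def)
    also have "\<dots> \<le> R0 + R0"
    proof (rule add_mono)
      show "\<bar>W K s - h s\<bar> \<le> R0" using supnorm_ge W_bdd order_trans by blast
      have "\<bar>S h s - S (x m) s\<bar> \<le> supnorm (\<lambda>s. S h s - S (x m) s)" by (rule supnorm_ge)
      also have "\<dots> \<le> supnorm (\<lambda>s. h s - x m s)" by (rule ne)
      also have "\<dots> = supnorm (\<lambda>s. x m s - h s)" by (rule supnorm_sym)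
      also have "\<dots> \<le> R0" unfolding x_def by (rule W_bdd)
      finally show "\<bar>S h s - S (x m) s\<bar> \<le> R0" .
    qed
    finally show "\<bar>x 0 s - S (x m) s\<bar> \<le> 2 * R0" by simp
  qed
  have KMb: "supnorm (\<lambda>s. x n s - S (x n) s) \<le> 2 * R0 * Th a n n 1"
    using KM_bound[of S x a R0 n n] ne rec a01 bd by blast
  have sumeq: "(\<Sum>i\<in>{1..n}. a i * (1 - a i)) = (\<Sum>i=K+1..k. lam i * (1 - lam i))"
  proof -
    have "(\<Sum>i\<in>{1..n}. a i * (1 - a i)) = (\<Sum>i\<in>{1..n}. lam (i + K) * (1 - lam (i + K)))"
      by (rule sum.cong) (auto simp: a_def algebra_simps)
    also have "\<dots> = (\<Sum>i\<in>{1+K..n+K}. lam i * (1 - lam i))"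
      by (rule sum.shift_bounds_cl_nat_ivl[symmetric])
    also have "{1+K..n+K} = {K+1..k}" using kn by auto
    finally show ?thesis .
  qed
  have spos: "0 < (\<Sum>i\<in>{1..n}. a i * (1 - a i))"
    unfolding sumeq
  proof (rule sum_pos)
    show "finite {K+1..k}" by simp
    show "{K+1..k} \<noteq> {}" using Kk by simp
    fix i assume "i \<in> {K+1..k}"
    then show "0 < lam i * (1 - lam i)" using lam_pos[of i] lam_lt1[of i] by simp
  qed
  have FF: "Th a n n 1 \<le> 1 / sqrt (pi * (\<Sum>i\<in>{1..n}. a i * (1 - a i)))"
    by (rule fourier_final[OF a01 spos])
  have resid: "(\<lambda>s. T_opt P r (V k) s - V k s - g s) = (\<lambda>s. S (x n) s - x n s)"
  proof
    fix s
    show "T_opt P r (V k) s - V k s - g s = S (x n) s - x n s"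
      unfolding T_eq_TG_W[OF Kfix[rule_format, OF less_imp_le[OF Kk]]] using Kk
      by (simp add: W_def S_def x_def kn)
  qed
  have "supnorm (\<lambda>s. T_opt P r (V k) s - V k s - g s) = supnorm (\<lambda>s. x n s - S (x n) s)"
    unfolding resid by (rule supnorm_sym)
  also have "\<dots> \<le> 2 * R0 * Th a n n 1" by (rule KMb)
  also have "\<dots> \<le> 2 * R0 * (1 / sqrt (pi * (\<Sum>i\<in>{1..n}. a i * (1 - a i))))"
    using FF R0_nonneg by (intro mult_left_mono) auto
  also have "\<dots> = 2 * supnorm (\<lambda>s. V 0 s - h s) / sqrt (pi * (\<Sum>i=K+1..k. lam i * (1 - lam i)))"
    unfolding sumeq R0_def by simp
  finally show ?thesis .
qed

lemma main_gain:
  assumes fx: "P_pol P (pol k) g = g"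
  shows "supnorm (\<lambda>s. g s - gain P r (pol k) s) \<le> supnorm (\<lambda>s. T_opt P r (V k) s - V k s - g s)"
proof (rule supnorm_le)
  fix s
  define M where "M = P_pol P (pol k)"
  define dd where "dd = (\<lambda>s. T_opt P r (V k) s - V k s - g s)"
  define e where "e = supnorm dd"
  define B where "B = supnorm (V k)"
  have rp: "r_pol r (pol k) = (\<lambda>s. (V k s + g s + dd s) - M (V k) s)"
  proof
    fix s
    have "r_pol r (pol k) s + M (V k) s = T_opt P r (V k) s"
      using greedy[of k] unfolding M_def T_pol_def by (metis)
    then show "r_pol r (pol k) s = (V k s + g s + dd s) - M (V k) s" by (simp add: dd_def)
  qed
  have pw: "(M ^^ t) (r_pol r (pol k)) s = (M ^^ t) (V k) s + g s + (M ^^ t) dd s - (M ^^ Suc t) (V k) s" for t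
  proof -
    have "(M ^^ t) (r_pol r (pol k)) s = (M ^^ t) (\<lambda>s. V k s + g s + dd s) s - (M ^^ t) (M (V k)) s"
      unfolding rp M_def Ppow_diff by simp
    also have "(M ^^ t) (\<lambda>s. V k s + g s + dd s) s = (M ^^ t) (V k) s + (M ^^ t) g s + (M ^^ t) dd s"
      unfolding M_def Ppow_add by simp
    also have "(M ^^ t) g = g" unfolding M_def by (rule Ppow_fix[OF fx])
    also have "(M ^^ t) (M (V k)) = (M ^^ Suc t) (V k)" by (simp add: funpow_swap1)
    finally show ?thesis .
  qed
  have sum_eq: "(\<Sum>t<T. (M ^^ t) (r_pol r (pol k)) s)
      = ((M ^^ 0) (V k) s - (M ^^ T) (V k) s) + real T * g s + (\<Sum>t<T. (M ^^ t) dd s)" for T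
  proof -
    have "(\<Sum>t<T. (M ^^ t) (r_pol r (pol k)) s)
        = (\<Sum>t<T. ((M ^^ t) (V k) s - (M ^^ Suc t) (V k) s) + g s + (M ^^ t) dd s)"
      unfolding pw by (rule sum.cong) (auto simp: algebra_simps)
    also have "\<dots> = (\<Sum>t<T. (M ^^ t) (V k) s - (M ^^ Suc t) (V k) s) + real T * g s + (\<Sum>t<T. (M ^^ t) dd s)"
      by (simp add: sum.distrib)
    also have "(\<Sum>t<T. (M ^^ t) (V k) s - (M ^^ Suc t) (V k) s) = (M ^^ 0) (V k) s - (M ^^ T) (V k) s"
      by (rule sum_lessThan_telescope'[where f="\<lambda>t. (M ^^ t) (V k) s"])
    finally show ?thesis .
  qed
  have bnd: "\<bar>(M ^^ t) u s\<bar> \<le> supnorm u" for t u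
    unfolding M_def by (rule Ppow_bound[OF mdp pol_pol])
  have close: "\<bar>(1 / real T) * (\<Sum>t<T. (M ^^ t) (r_pol r (pol k)) s) - g s\<bar> \<le> e + (2 * B) / real T"
    if T1: "T \<ge> 1" for T
  proof -
    have Tp: "0 < real T" using T1 by simp
    have sd: "\<bar>\<Sum>t<T. (M ^^ t) dd s\<bar> \<le> real T * e"
    proof -
      have "\<bar>\<Sum>t<T. (M ^^ t) dd s\<bar> \<le> (\<Sum>t<T. \<bar>(M ^^ t) dd s\<bar>)" by (rule sum_abs)
      also have "\<dots> \<le> (\<Sum>t<T. e)" unfolding e_def by (intro sum_mono bnd)
      finally show ?thesis by simp
    qed
    have vb: "\<bar>(M ^^ 0) (V k) s - (M ^^ T) (V k) s\<bar> \<le> 2 * B"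
      using bnd[of 0 "V k"] bnd[of T "V k"] unfolding B_def by linarith
    have eq: "(1 / real T) * (\<Sum>t<T. (M ^^ t) (r_pol r (pol k)) s) - g s
        = ((M ^^ 0) (V k) s - (M ^^ T) (V k) s) / real T + (\<Sum>t<T. (M ^^ t) dd s) / real T"
      unfolding sum_eq using Tp by (simp add: field_simps)
    have a1: "\<bar>((M ^^ 0) (V k) s - (M ^^ T) (V k) s) / real T\<bar> \<le> (2 * B) / real T"
      using vb Tp by (simp add: abs_divide divide_right_mono)
    have a2: "\<bar>(\<Sum>t<T. (M ^^ t) dd s) / real T\<bar> \<le> e"
      using sd Tp by (simp add: abs_divide pos_divide_le_eq mult.commute)
    show ?thesis unfolding eq using abs_triangle_ineq[of "((M ^^ 0) (V k) s - (M ^^ T) (V k) s) / real T" "(\<Sum>t<T. (M ^^ t) dd s) / real T"] a1 a2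
      by linarith
  qed
  have "\<bar>g s - gain P r (pol k) s\<bar> \<le> e"
    unfolding gain_def M_def[symmetric] by (rule liminf_close[OF close])
  then show "\<bar>g s - gain P r (pol k) s\<bar> \<le> supnorm (\<lambda>s. T_opt P r (V k) s - V k s - g s)"
    by (simp add: e_def dd_def)
qed

end

theorem theorem8:
  fixes P :: "'s::finite \<Rightarrow> 'a::finite \<Rightarrow> 's \<Rightarrow> real"
    and r :: "'s \<Rightarrow> 'a \<Rightarrow> real"
    and g h :: "'s \<Rightarrow> real"
    and lam :: "nat \<Rightarrow> real"
    and V :: "nat \<Rightarrow> 's \<Rightarrow> real"
    and pol :: "nat \<Rightarrow> 's \<Rightarrow> 'a \<Rightarrow> real"
  assumes mdp: "is_mdp P"
    and sol: "mod_bellman P r g h"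
    and lam_pos: "\<And>j. j \<ge> 1 \<Longrightarrow> 0 < lam j"
    and lam_lt1: "\<And>j. j \<ge> 1 \<Longrightarrow> lam j < 1"
    and lam_limsup: "limsup (\<lambda>j. ereal (lam j)) < 1"
    and V_rec: "\<And>k. k \<ge> 1 \<Longrightarrow>
        V k = (\<lambda>s. lam k * V (k - 1) s + (1 - lam k) * T_opt P r (V (k - 1)) s)"
    and pol_pol: "\<And>k. is_policy (pol k)"
    and greedy: "\<And>k. T_pol P r (pol k) (V k) = T_opt P r (V k)"
  shows "(\<exists>K::nat. \<forall>k\<ge>K. P_pol P (pol k) g = g) \<and>
         (let K = (LEAST K::nat. \<forall>k\<ge>K. P_pol P (pol k) g = g) in
          \<forall>k>K.
            supnorm (\<lambda>s. g s - gain P r (pol k) s)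
              \<le> supnorm (\<lambda>s. T_opt P r (V k) s - V k s - g s) \<and>
            supnorm (\<lambda>s. T_opt P r (V k) s - V k s - g s)
              \<le> 2 * supnorm (\<lambda>s. V 0 s - h s)
                 / sqrt (pi * (\<Sum>i=K+1..k. lam i * (1 - lam i))))"
proof -
  note A = mdp sol lam_pos lam_lt1 lam_limsup V_rec pol_pol greedy
  have ex: "\<exists>K::nat. \<forall>k\<ge>K. P_pol P (pol k) g = g" by (rule K_exists[OF A])
  define K where "K = (LEAST K::nat. \<forall>k\<ge>K. P_pol P (pol k) g = g)"
  have Kfix: "\<forall>k\<ge>K. P_pol P (pol k) g = g" unfolding K_def by (rule LeastI_ex[OF ex])
  have main: "supnorm (\<lambda>s. g s - gain P r (pol k) s)
              \<le> supnorm (\<lambda>s. T_opt P r (V k) s - V k s - g s) \<and>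
            supnorm (\<lambda>s. T_opt P r (V k) s - V k s - g s)
              \<le> 2 * supnorm (\<lambda>s. V 0 s - h s)
                 / sqrt (pi * (\<Sum>i=K+1..k. lam i * (1 - lam i)))" if Kk: "K < k" for k
  proof
    show "supnorm (\<lambda>s. g s - gain P r (pol k) s) \<le> supnorm (\<lambda>s. T_opt P r (V k) s - V k s - g s)"
      by (rule main_gain[OF A]) (use Kfix Kk in auto)
    show "supnorm (\<lambda>s. T_opt P r (V k) s - V k s - g s)
              \<le> 2 * supnorm (\<lambda>s. V 0 s - h s) / sqrt (pi * (\<Sum>i=K+1..k. lam i * (1 - lam i)))"
      by (rule main_KM[where K=K]) (use A Kfix Kk in auto)
  qed
  show ?thesis unfolding Let_def K_def[symmetric] using ex main by blast
qed

end
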